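(* Let $\varphi:\mathcal X\to\mathbb R^m$ and let $p,q$ be probability distributions on $\mathcal X$ with $\Sigma_q$ invertible. Let $(v_i)_{i=1}^m$ be a basis of generalized eigenvectors of the pair $(\Sigma_p,\Sigma_q)$: $v_i^\top\Sigma_q v_j=1_{i=j}$ and $\Sigma_p v_i=\lambda_i\Sigma_q v_i$. Let $h(\lambda)=f(\lambda)/(\lambda-1)^2$ (with $h(1)=f''(1)/2$) and define $$c=\sum_{i=1}^m h(\lambda_i)\,v_iv_i^\top(\mu_p-\mu_q),$$ $$M=\sum_{i,j=1}^m \big((\mu_p-\mu_q)^\top v_i\big)\big(v_j^\top(\mu_p-\mu_q)\big)\frac{h(\lambda_i)-h(\lambda_j)}{\lambda_i-\lambda_j}\,v_iv_j^\top,$$ $$N=-\sum_{i,j=1}^m \big((\mu_p-\mu_q)^\top v_i\big)\big(v_j^\top(\mu_p-\mu_q)\big)\frac{\lambda_ih(\lambda_i)-\lambda_jh(\lambda_j)}{\lambda_i-\lambda_j}\,v_iv_j^\top,$$ where divided differences are replaced by the corresponding derivatives when $\lambda_i=\lambda_j$. Define $v(x)=\varphi(x)^\top M\varphi(x)+2c^\top\varphi(x)$ and $w(x)=\varphi(x)^\top N\varphi(x)-2c^\top\varphi(x)$. Then $v,w$ are feasible, i.e. $w(x)\le -f^*(v(x))$ for all $x\in\mathcal X$ (equivalently $\lambda v(x)+w(x)\le f(\lambda)$ for all $\lambda>0$, $x\in\mathcal X$), and $$F(p\|q,\varphi)=\int_{\mathcal X}v\,dp+\int_{\mathcal X}w\,dq=\sum_{i=1}^m\frac{f(\lambda_i)}{(\lambda_i-1)^2}\big((\mu_p-\mu_q)^\top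 v_i\big)^2 .$$
   Context: Let $\nu$ be a probability measure on $[0,1]$ and $f(t)=\int_0^1\frac12\frac{(t-1)^2}{\rho t+1-\rho}\,d\nu(\rho)$ for $t>0$; $f^*(u)=\sup_{t>0}(ut-f(t))$. Moments: $\mu_p=\int\varphi\,dp$, $\mu_q=\int\varphi\,dq$, $\Sigma_p=\int\varphi\varphi^\top dp$, $\Sigma_q=\int\varphi\varphi^\top dq$. The moment-based divergence is $F(p\|q,\varphi)=\frac12\int_0^1(\mu_p-\mu_q)^\top(\rho\Sigma_p+(1-\rho)\Sigma_q)^{-1}(\mu_p-\mu_q)\,d\nu(\rho)$. The term $f(\lambda_i)/(\lambda_i-1)^2$ is interpreted as $f''(1)/2$ when $\lambda_i=1$. *)

theory Defs
  imports "HOL-Probability.Probability"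
begin

definition fgen :: "real measure \<Rightarrow> real \<Rightarrow> real" where
  "fgen \<nu> t = (\<integral>\<rho>. (1/2) * (t - 1)^2 / (\<rho> * t + 1 - \<rho>) \<partial>\<nu>)"

definition fconj :: "real measure \<Rightarrow> real \<Rightarrow> ereal" where
  "fconj \<nu> u = (SUP t\<in>{0<..}. ereal (u * t - fgen \<nu> t))"

definition hfun :: "real measure \<Rightarrow> real \<Rightarrow> real" where
  "hfun \<nu> l = (if l = 1 then deriv (deriv (fgen \<nu>)) 1 / 2
               else fgen \<nu> l / (l - 1)^2)"

definition divdiff :: "(real \<Rightarrow> real) \<Rightarrow> real \<Rightarrow> real \<Rightarrow> real" where
  "divdiff g a b = (if a = b then deriv g a else (g a - g b) / (a - b))"

definition outer :: "real^'m \<Rightarrow> real^'m \<Rightarrow> real^'m^'m" where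
  "outer x y = (\<chi> i j. x $ i * y $ j)"

definition mean_vec :: "'a measure \<Rightarrow> ('a \<Rightarrow> real^'m) \<Rightarrow> real^'m" where
  "mean_vec p \<phi> = (\<integral>x. \<phi> x \<partial>p)"

definition second_moment :: "'a measure \<Rightarrow> ('a \<Rightarrow> real^'m) \<Rightarrow> real^'m^'m" where
  "second_moment p \<phi> = (\<integral>x. outer (\<phi> x) (\<phi> x) \<partial>p)"

definition Fdiv :: "real measure \<Rightarrow> 'a measure \<Rightarrow> 'a measure \<Rightarrow> ('a \<Rightarrow> real^'m) \<Rightarrow> real" where
  "Fdiv \<nu> p q \<phi> =
     (let d = mean_vec p \<phi> - mean_vec q \<phi>;
          Sp = second_moment p \<phi>; Sq = second_moment q \<phi>
      in (1/2) * (\<integral>\<rho>. d \<bullet> (matrix_inv (\<rho> *\<^sub>R Sp + (1 - \<rho>) *\<^sub>R Sq) *v d) \<partial>\<nu>))"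


text \<open>The dual certificate built from the generalized eigenbasis V with eigenvalues lam;
  d = mu_p - mu_q.\<close>
definition cvec :: "real measure \<Rightarrow> real^'m \<Rightarrow> ('m \<Rightarrow> real^'m) \<Rightarrow> ('m \<Rightarrow> real) \<Rightarrow> real^'m" where
  "cvec \<nu> d V lam = (\<Sum>i\<in>UNIV. (hfun \<nu> (lam i) * (V i \<bullet> d)) *\<^sub>R V i)"

definition Mmat :: "real measure \<Rightarrow> real^'m \<Rightarrow> ('m \<Rightarrow> real^'m) \<Rightarrow> ('m \<Rightarrow> real) \<Rightarrow> real^'m^'m" where
  "Mmat \<nu> d V lam = (\<Sum>i\<in>UNIV. \<Sum>j\<in>UNIV.
     ((d \<bullet> V i) * (V j \<bullet> d) * divdiff (hfun \<nu>) (lam i) (lam j)) *\<^sub>R outer (V i) (V j))"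

definition Nmat :: "real measure \<Rightarrow> real^'m \<Rightarrow> ('m \<Rightarrow> real^'m) \<Rightarrow> ('m \<Rightarrow> real) \<Rightarrow> real^'m^'m" where
  "Nmat \<nu> d V lam = - (\<Sum>i\<in>UNIV. \<Sum>j\<in>UNIV.
     ((d \<bullet> V i) * (V j \<bullet> d) * divdiff (\<lambda>l. l * hfun \<nu> l) (lam i) (lam j)) *\<^sub>R outer (V i) (V j))"

end

theory Submission
  imports Defs
begin

definition Lf :: "real \<Rightarrow> real \<Rightarrow> real" where "Lf \<rho> t = \<rho> * t + 1 - \<rho>"

lemma Lf_pos:
  assumes "0 \<le> \<rho>" "\<rho> \<le> 1" "t > 0"
  shows "Lf \<rho> t \<ge> min t 1" "Lf \<rho> t > 0"
proof -
  show "Lf \<rho> t \<ge> min t 1"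
  proof (cases "t \<ge> 1")
    case True
    then have "\<rho> * t \<ge> \<rho>" using assms by (metis mult_left_mono mult.right_neutral)
    then show ?thesis using True by (simp add: Lf_def)
  next
    case False
    then have "\<rho> * (1 - t) \<le> 1 - t" using assms by (simp add: mult_left_le_one_le)
    then show ?thesis using False by (simp add: Lf_def algebra_simps)
  qed
  then show "Lf \<rho> t > 0" using assms by linarith
qed

lemma alg1:
  fixes X Y r z :: real
  assumes "X \<noteq> 0" "Y \<noteq> 0" "X = Y + r * z"
  shows "1/(2*X) - 1/(2*Y) + z*(r/(2*Y*Y)) = r^2*z^2/(2*X*Y*Y)"
  using assms(1,2) apply (simp add: field_simps power2_eq_square)
  unfolding assms(3) by (simp add: algebra_simps)
lemma core:
  fixes z R h1 h2 :: real
  assumes "\<bar>z\<bar> < 1/2" "0 \<le> R" "R \<le> 4 * z^2" "0 \<le> h1" "h1 \<le> 1/2" "0 \<le> h2" "h2 \<le> 2"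
  shows "\<bar>2 * z * (1/2 + R - z * h1) - z^2 * h2 - z\<bar> \<le> 7 * z^2"
proof -
  have e: "2 * z * (1/2 + R - z * h1) - z^2 * h2 - z = 2 * z * R - z^2 * (2 * h1 + h2)" by (simp add: algebra_simps power2_eq_square)
  have "\<bar>2 * z * R\<bar> = 2 * \<bar>z\<bar> * R" using assms by (simp add: abs_mult)
  also have "\<dots> \<le> 2 * (1/2) * (4 * z^2)" using assms by (intro mult_mono) auto
  finally have 1: "\<bar>2 * z * R\<bar> \<le> 4 * z^2" by simp
  have "\<bar>z^2 * (2 * h1 + h2)\<bar> = z^2 * (2 * h1 + h2)" using assms by simp
  also have "\<dots> \<le> z^2 * 3" using assms by (intro mult_left_mono) auto
  finally have 2: "\<bar>z^2 * (2 * h1 + h2)\<bar> \<le> 3 * z^2" by simp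
  show ?thesis unfolding e using 1 2 by linarith
qed
lemma alg2:
  fixes X Y r a b :: real
  assumes "X \<noteq> 0" "Y \<noteq> 0" "X = Y + r * (a - b)"
  shows "1/(2*X) - 1/(2*Y) = (a - b) * (- (r / (2*X*Y)))"
  using assms(1,2) apply (simp add: field_simps)
  unfolding assms(3) by (simp add: algebra_simps)
lemma alg3:
  fixes X Y r a b :: real
  assumes "X \<noteq> 0" "Y \<noteq> 0" "X = r * a + 1 - r" "Y = r * b + 1 - r"
  shows "a * (1/(2*X)) - b * (1/(2*Y)) = (a - b) * ((1 - r) / (2*X*Y))"
  using assms(1,2) apply (simp add: field_simps)
  unfolding assms(3,4) by (simp add: algebra_simps)
lemma alg4:
  fixes X r a :: real
  assumes "X \<noteq> 0" "X = r * a + 1 - r"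
  shows "1/(2*X) - a * (r/(2*X*X)) = (1 - r) / (2*X*X)"
  using assms(1) apply (simp add: field_simps)
  unfolding assms(2) by (simp add: algebra_simps)

lemma QB:
  fixes f :: "real \<Rightarrow> real"
  assumes "\<delta> > 0" "\<And>t. \<bar>t - a\<bar> < \<delta> \<Longrightarrow> \<bar>f t - f a - (t - a) * D\<bar> \<le> C * (t - a)^2"
  shows "(f has_real_derivative D) (at a)"
proof -
  have "((\<lambda>y. (f y - f a) / (y - a) - D) \<longlongrightarrow> 0) (at a)"
  proof (rule Lim_null_comparison)
    show "\<forall>\<^sub>F y in at a. norm ((f y - f a) / (y - a) - D) \<le> \<bar>C\<bar> * \<bar>y - a\<bar>"
      unfolding eventually_at
    proof (intro exI[of _ \<delta>] conjI ballI impI)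
      fix y assume y: "y \<noteq> a \<and> dist y a < \<delta>"
      then have ne: "y - a \<noteq> 0" by simp
      have "(f y - f a) / (y - a) - D = (f y - f a - (y - a) * D) / (y - a)"
        using ne by (simp add: field_simps)
      also have "\<bar>\<dots>\<bar> = \<bar>f y - f a - (y - a) * D\<bar> / \<bar>y - a\<bar>" by (simp add: abs_divide)
      also have "\<dots> \<le> C * (y - a)^2 / \<bar>y - a\<bar>"
        using assms(2)[of y] y by (intro divide_right_mono) (auto simp: dist_real_def)
      also have "\<dots> = C * \<bar>y - a\<bar>"
      proof -
        have "C * (y - a)^2 / \<bar>y - a\<bar> = (C * \<bar>y - a\<bar>) * \<bar>y - a\<bar> / \<bar>y - a\<bar>"
          by (simp add: power2_eq_square mult.assoc)
        also have "\<dots> = C * \<bar>y - a\<bar>" using ne by simp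
        finally show ?thesis .
      qed
      also have "\<dots> \<le> \<bar>C\<bar> * \<bar>y - a\<bar>" by (simp add: mult_right_mono)
      finally show "norm ((f y - f a) / (y - a) - D) \<le> \<bar>C\<bar> * \<bar>y - a\<bar>" by simp
    qed (use assms in auto)
    have "((\<lambda>y. y - a) \<longlongrightarrow> 0) (at a)" by (intro tendsto_eq_intros) auto
    then have "((\<lambda>y. \<bar>y - a\<bar>) \<longlongrightarrow> 0) (at a)" by (rule tendsto_rabs_zero)
    then show "((\<lambda>y. \<bar>C\<bar> * \<bar>y - a\<bar>) \<longlongrightarrow> 0) (at a)" by (rule tendsto_mult_right_zero)
  qed
  then have "((\<lambda>y. (f y - f a) / (y - a)) \<longlongrightarrow> D) (at a)" by (simp add: LIM_zero_iff)
  then show ?thesis by (simp add: has_field_derivative_iff)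
qed

locale nuctx = prob_space \<nu> for \<nu> :: "real measure" +
  assumes nu_borel: "sets \<nu> = sets borel"
    and nu_supp: "AE \<rho> in \<nu>. 0 \<le> \<rho> \<and> \<rho> \<le> 1"
begin

lemma meas_nu: "g \<in> borel_measurable borel \<Longrightarrow> g \<in> borel_measurable \<nu>"
  using measurable_cong_sets[OF nu_borel refl, of borel] by blast

lemma intL:
  assumes "continuous_on {0..1} g" "g \<in> borel_measurable borel"
  shows "integrable \<nu> (g :: real \<Rightarrow> real)"
proof -
  have "compact (g ` {0..1})" using assms(1) compact_continuous_image by blast
  then obtain B where B: "\<And>x. x \<in> {0..1} \<Longrightarrow> norm (g x) \<le> B"
    using compact_imp_bounded bounded_iff by (metis image_eqI)
  show ?thesis
    apply (rule integrable_const_bound[where B=B])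
    using nu_supp apply eventually_elim using B apply auto[1]
    using assms(2) meas_nu by blast
qed

lemma int_bounds:
  fixes f :: "real \<Rightarrow> real"
  assumes "integrable \<nu> f" "AE \<rho> in \<nu>. lo \<le> f \<rho> \<and> f \<rho> \<le> hi"
  shows "lo \<le> integral\<^sup>L \<nu> f \<and> integral\<^sup>L \<nu> f \<le> hi"
proof
  have "integral\<^sup>L \<nu> (\<lambda>_. lo) \<le> integral\<^sup>L \<nu> f"
    by (rule integral_mono_AE) (use assms in auto)
  then show "lo \<le> integral\<^sup>L \<nu> f" by (simp add: prob_space)
  have "integral\<^sup>L \<nu> f \<le> integral\<^sup>L \<nu> (\<lambda>_. hi)"
    by (rule integral_mono_AE) (use assms in auto)
  then show "integral\<^sup>L \<nu> f \<le> hi" by (simp add: prob_space)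
qed

lemma AE_L: "AE \<rho> in \<nu>. 0 \<le> \<rho> \<and> \<rho> \<le> 1 \<and> (\<forall>t>0. Lf \<rho> t > 0 \<and> Lf \<rho> t \<ge> min t 1)"
  using nu_supp by eventually_elim (auto intro: Lf_pos)

lemma contL: "t > 0 \<Longrightarrow> \<forall>\<rho>\<in>{0..1}. Lf \<rho> t \<noteq> 0"
  using Lf_pos(2) by fastforce

definition H :: "real \<Rightarrow> real" where "H t = (\<integral>\<rho>. 1 / (2 * Lf \<rho> t) \<partial>\<nu>)"
definition H1 :: "real \<Rightarrow> real" where "H1 t = (\<integral>\<rho>. \<rho> / (2 * Lf \<rho> t * Lf \<rho> t) \<partial>\<nu>)"

lemma int1: "t > 0 \<Longrightarrow> integrable \<nu> (\<lambda>\<rho>. 1 / (2 * Lf \<rho> t))"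
  by (rule intL) (use contL[of t] in \<open>auto intro!: continuous_intros simp: Lf_def\<close>)


lemma lin3:
  fixes f g h :: "real \<Rightarrow> real"
  assumes "integrable \<nu> f" "integrable \<nu> g" "integrable \<nu> h"
  shows "(\<integral>x. f x - g x + c * h x \<partial>\<nu>) = integral\<^sup>L \<nu> f - integral\<^sup>L \<nu> g + c * integral\<^sup>L \<nu> h"
  using assms by simp

lemma intH1: "t > 0 \<Longrightarrow> integrable \<nu> (\<lambda>\<rho>. \<rho> / (2 * Lf \<rho> t * Lf \<rho> t))"
  by (rule intL) (use contL[of t] in \<open>auto intro!: continuous_intros simp: Lf_def\<close>)

lemma intR: "t > 0 \<Longrightarrow> a > 0 \<Longrightarrow> integrable \<nu> (\<lambda>\<rho>. \<rho>^2 * (t - a)^2 / (2 * Lf \<rho> t * Lf \<rho> a * Lf \<rho> a))"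
  by (rule intL) (use contL[of t] contL[of a] in \<open>auto intro!: continuous_intros simp: Lf_def\<close>)

lemma H1_bound: assumes "t > 0" shows "0 \<le> H1 t \<and> H1 t \<le> 1 / (2 * (min t 1)^2)"
  unfolding H1_def
proof (rule int_bounds[OF intH1[OF assms]])
  show "AE \<rho> in \<nu>. 0 \<le> \<rho> / (2 * Lf \<rho> t * Lf \<rho> t) \<and> \<rho> / (2 * Lf \<rho> t * Lf \<rho> t) \<le> 1 / (2 * (min t 1)^2)"
    using AE_L
  proof eventually_elim
    case (elim \<rho>)
    then have L: "Lf \<rho> t > 0" "Lf \<rho> t \<ge> min t 1" using assms by auto
    have m: "min t 1 > 0" using assms by simp
    have "min t 1 * min t 1 \<le> Lf \<rho> t * Lf \<rho> t"
      by (intro mult_mono) (use L m in auto)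
    then have "2 * (min t 1)^2 \<le> 2 * Lf \<rho> t * Lf \<rho> t"
      by (simp add: power2_eq_square)
    then have "\<rho> / (2 * Lf \<rho> t * Lf \<rho> t) \<le> 1 / (2 * (min t 1)^2)"
      using elim L m by (intro frac_le) auto
    then show ?case using elim L by auto
  qed
qed

lemma Hrem:
  assumes a: "a > 0" and t: "\<bar>t - a\<bar> < a / 2"
  shows "0 \<le> H t - H a + (t - a) * H1 a \<and> H t - H a + (t - a) * H1 a \<le> (t - a)^2 / (2 * (min (a/2) 1)^3)"
proof -
  have tp: "t > 0" using a t by linarith
  have "H t - H a + (t - a) * H1 a
      = (\<integral>\<rho>. 1 / (2 * Lf \<rho> t) - 1 / (2 * Lf \<rho> a) + (t - a) * (\<rho> / (2 * Lf \<rho> a * Lf \<rho> a)) \<partial>\<nu>)"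
    unfolding H_def H1_def
    by (rule lin3[symmetric]) (intro int1 intH1 tp a)+
  also have "\<dots> = (\<integral>\<rho>. \<rho>^2 * (t - a)^2 / (2 * Lf \<rho> t * Lf \<rho> a * Lf \<rho> a) \<partial>\<nu>)"
  proof (rule integral_cong_AE)
    show "AE \<rho> in \<nu>. 1 / (2 * Lf \<rho> t) - 1 / (2 * Lf \<rho> a) + (t - a) * (\<rho> / (2 * Lf \<rho> a * Lf \<rho> a))
       = \<rho>^2 * (t - a)^2 / (2 * Lf \<rho> t * Lf \<rho> a * Lf \<rho> a)"
      using AE_L
    proof eventually_elim
      case (elim \<rho>)
      then have "Lf \<rho> t \<noteq> 0" "Lf \<rho> a \<noteq> 0" using a tp by (metis less_irrefl)+
      then show ?case by (intro alg1) (auto simp: Lf_def algebra_simps)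
    qed
  qed (auto intro!: meas_nu simp: Lf_def)
  finally have eq: "H t - H a + (t - a) * H1 a = (\<integral>\<rho>. \<rho>^2 * (t - a)^2 / (2 * Lf \<rho> t * Lf \<rho> a * Lf \<rho> a) \<partial>\<nu>)" .
  have "0 \<le> (\<integral>\<rho>. \<rho>^2 * (t - a)^2 / (2 * Lf \<rho> t * Lf \<rho> a * Lf \<rho> a) \<partial>\<nu>) \<and> (\<integral>\<rho>. \<rho>^2 * (t - a)^2 / (2 * Lf \<rho> t * Lf \<rho> a * Lf \<rho> a) \<partial>\<nu>) \<le> (t - a)^2 / (2 * (min (a/2) 1)^3)"
  proof (rule int_bounds[OF intR[OF tp a]])
    show "AE \<rho> in \<nu>. 0 \<le> \<rho>^2 * (t - a)^2 / (2 * Lf \<rho> t * Lf \<rho> a * Lf \<rho> a) \<and> \<rho>^2 * (t - a)^2 / (2 * Lf \<rho> t * Lf \<rho> a * Lf \<rho> a) \<le> (t - a)^2 / (2 * (min (a/2) 1)^3)"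
      using AE_L
    proof eventually_elim
      case (elim \<rho>)
      define m where "m = min (a/2) 1"
      have m: "m > 0" using a by (simp add: m_def)
      have Lt1: "Lf \<rho> t \<ge> min t 1" using elim tp by auto
      have t2: "t \<ge> a / 2" using t by linarith
      have mt: "min t 1 \<ge> m" unfolding m_def using t2 by (intro min.mono) auto
      have Lt: "Lf \<rho> t \<ge> m" using Lt1 mt by linarith
      have "Lf \<rho> a \<ge> min a 1" using elim a by auto
      moreover have "min a 1 \<ge> m" using a unfolding m_def by auto
      ultimately have La: "Lf \<rho> a \<ge> m" by linarith
      have "m * m * m \<le> Lf \<rho> t * Lf \<rho> a * Lf \<rho> a"
        by (intro mult_mono) (use Lt La m in auto)
      then have "2 * m^3 \<le> 2 * Lf \<rho> t * Lf \<rho> a * Lf \<rho> a"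
        by (simp add: power3_eq_cube)
      moreover have "\<rho>^2 * (t - a)^2 \<le> (t - a)^2"
        using elim by (simp add: mult_left_le_one_le power_le_one)
      ultimately have "\<rho>^2 * (t - a)^2 / (2 * Lf \<rho> t * Lf \<rho> a * Lf \<rho> a) \<le> (t - a)^2 / (2 * m^3)"
        using m by (intro frac_le) auto
      moreover have "0 \<le> \<rho>^2 * (t - a)^2 / (2 * Lf \<rho> t * Lf \<rho> a * Lf \<rho> a)"
        using Lt La m by simp
      ultimately show ?case by (simp add: m_def)
    qed
  qed
  then show ?thesis using eq by simp
qed

lemma H_deriv: assumes a: "a > 0" shows "(H has_real_derivative (- H1 a)) (at a)"
proof (rule QB[where \<delta> = "a/2" and C = "1 / (2 * (min (a/2) 1)^3)"])
  fix t assume "\<bar>t - a\<bar> < a / 2"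
  from Hrem[OF a this] show "\<bar>H t - H a - (t - a) * - H1 a\<bar> \<le> 1 / (2 * (min (a/2) 1)^3) * (t - a)^2"
    by simp
qed (use a in auto)


lemma int_cong01:
  fixes f g :: "real \<Rightarrow> real"
  assumes "\<And>\<rho>. 0 \<le> \<rho> \<Longrightarrow> \<rho> \<le> 1 \<Longrightarrow> f \<rho> = g \<rho>"
    "f \<in> borel_measurable borel" "g \<in> borel_measurable borel"
  shows "integral\<^sup>L \<nu> f = integral\<^sup>L \<nu> g"
proof (rule integral_cong_AE)
  show "AE x in \<nu>. f x = g x" using nu_supp by eventually_elim (use assms in auto)
qed (use assms meas_nu in auto)

lemma lin2:
  fixes f g :: "real \<Rightarrow> real"
  assumes "integrable \<nu> f" "integrable \<nu> g"
  shows "(\<integral>x. f x - g x \<partial>\<nu>) = integral\<^sup>L \<nu> f - integral\<^sup>L \<nu> g"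
  using assms by simp

lemma linc:
  fixes f :: "real \<Rightarrow> real"
  shows "(\<integral>x. c * f x \<partial>\<nu>) = c * integral\<^sup>L \<nu> f"
  by simp

lemma lin2c:
  fixes f g :: "real \<Rightarrow> real"
  assumes "integrable \<nu> f" "integrable \<nu> g"
  shows "(\<integral>x. f x - c * g x \<partial>\<nu>) = integral\<^sup>L \<nu> f - c * integral\<^sup>L \<nu> g"
  using assms by simp

lemma lin2d:
  fixes f g :: "real \<Rightarrow> real"
  assumes "integrable \<nu> f" "integrable \<nu> g"
  shows "(\<integral>x. c * f x - d * g x \<partial>\<nu>) = c * integral\<^sup>L \<nu> f - d * integral\<^sup>L \<nu> g"
  using assms by simp

lemma intAB: "a > 0 \<Longrightarrow> b > 0 \<Longrightarrow> integrable \<nu> (\<lambda>\<rho>. \<rho> / (2 * Lf \<rho> a * Lf \<rho> b))"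
  by (rule intL) (use contL[of a] contL[of b] in \<open>auto intro!: continuous_intros simp: Lf_def\<close>)

lemma intAB': "a > 0 \<Longrightarrow> b > 0 \<Longrightarrow> integrable \<nu> (\<lambda>\<rho>. (1 - \<rho>) / (2 * Lf \<rho> a * Lf \<rho> b))"
  by (rule intL) (use contL[of a] contL[of b] in \<open>auto intro!: continuous_intros simp: Lf_def\<close>)

lemma fgen_eq: "fgen \<nu> t = (t - 1)^2 * H t"
proof -
  have "(\<lambda>\<rho>. (1/2) * (t - 1)^2 / (\<rho> * t + 1 - \<rho>)) = (\<lambda>\<rho>. (t - 1)^2 * (1 / (2 * Lf \<rho> t)))"
    by (auto simp: Lf_def fun_eq_iff)
  then show ?thesis unfolding fgen_def H_def by (simp only: linc)
qed

lemma H_one: "H 1 = 1/2"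
  unfolding H_def Lf_def by (simp add: prob_space)

lemma fgen_deriv:
  assumes t: "t > 0"
  shows "(fgen \<nu> has_real_derivative (2 * (t - 1) * H t - (t - 1)^2 * H1 t)) (at t)"
proof -
  have f: "fgen \<nu> = (\<lambda>t. (t - 1)^2 * H t)" by (rule ext, rule fgen_eq)
  have "((\<lambda>t. (t - 1)^2) has_real_derivative 2 * (t - 1)) (at t)"
    by (auto intro!: derivative_eq_intros)
  from DERIV_mult[OF this H_deriv[OF t]] show ?thesis unfolding f
    by (simp add: algebra_simps)
qed

definition E :: "real \<Rightarrow> real" where "E t = 2 * (t - 1) * H t - (t - 1)^2 * H1 t"

lemma E_deriv: "(E has_real_derivative 1) (at 1)"
proof (rule QB[where \<delta> = "1/2" and C = 7])
  fix t :: real assume t: "\<bar>t - 1\<bar> < 1/2"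
  have tp: "t > 0" using t by linarith
  have R: "0 \<le> H t - H 1 + (t - 1) * H1 1" "H t - H 1 + (t - 1) * H1 1 \<le> 4 * (t - 1)^2"
    using Hrem[of 1 t] t by (auto simp: power3_eq_cube)
  have h1: "0 \<le> H1 1" "H1 1 \<le> 1/2" using H1_bound[of 1] by auto
  have mt: "min t 1 \<ge> 1/2" using t by linarith
  have "1 / (2 * (min t 1)^2) \<le> 1 / (2 * (1/2)^2)"
    using mt by (intro divide_left_mono mult_left_mono power_mono) auto
  also have "(1::real) / (2 * (1/2)^2) = 2" by (simp add: power2_eq_square)
  finally have b2: "1 / (2 * (min t 1)^2) \<le> 2" .
  have h2: "0 \<le> H1 t" "H1 t \<le> 2" using H1_bound[OF tp] b2 by linarith+
  have Ht: "E t - E 1 - (t - 1) * 1 = 2 * (t - 1) * (1/2 + (H t - H 1 + (t - 1) * H1 1) - (t - 1) * H1 1) - (t - 1)^2 * H1 t - (t - 1)"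
    unfolding E_def using H_one by (simp add: algebra_simps)
  have "\<bar>2 * (t - 1) * (1/2 + (H t - H 1 + (t - 1) * H1 1) - (t - 1) * H1 1) - (t - 1)^2 * H1 t - (t - 1)\<bar> \<le> 7 * (t - 1)^2"
    by (rule core) (use t R h1 h2 in auto)
  then show "\<bar>E t - E 1 - (t - 1) * 1\<bar> \<le> 7 * (t - 1)^2"
    unfolding Ht .
qed auto

lemma hfun_H: assumes t: "t > 0" shows "hfun \<nu> t = H t"
proof (cases "t = 1")
  case True
  have ev: "eventually (\<lambda>x. deriv (fgen \<nu>) x = E x) (nhds 1)"
  proof -
    have "eventually (\<lambda>x. x \<in> {0<..}) (nhds (1::real))"
      by (rule eventually_nhds_in_open) auto
    then show ?thesis
    proof eventually_elim
      case (elim x)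
      show ?case unfolding E_def by (rule DERIV_imp_deriv[OF fgen_deriv]) (use elim in simp)
    qed
  qed
  have "deriv (deriv (fgen \<nu>)) 1 = deriv E 1" by (rule deriv_cong_ev[OF ev refl])
  also have "\<dots> = 1" by (rule DERIV_imp_deriv[OF E_deriv])
  finally show ?thesis using True H_one by (simp add: hfun_def)
next
  case False
  then show ?thesis by (simp add: hfun_def fgen_eq)
qed

lemma ev_pos: "a > 0 \<Longrightarrow> eventually (\<lambda>x. x > (0::real)) (nhds a)"
  using eventually_nhds_in_open[of "{0<..}" a] by auto

lemma deriv_h: assumes a: "a > 0" shows "deriv (hfun \<nu>) a = - H1 a"
proof -
  have "deriv (hfun \<nu>) a = deriv H a"
    by (rule deriv_cong_ev[OF _ refl]) (use ev_pos[OF a] in \<open>eventually_elim, simp add: hfun_H\<close>)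
  also have "\<dots> = - H1 a" by (rule DERIV_imp_deriv[OF H_deriv[OF a]])
  finally show ?thesis .
qed

lemma deriv_lh: assumes a: "a > 0" shows "deriv (\<lambda>l. l * hfun \<nu> l) a = H a - a * H1 a"
proof -
  have "deriv (\<lambda>l. l * hfun \<nu> l) a = deriv (\<lambda>l. l * H l) a"
    by (rule deriv_cong_ev[OF _ refl]) (use ev_pos[OF a] in \<open>eventually_elim, simp add: hfun_H\<close>)
  also have "\<dots> = H a - a * H1 a"
    by (rule DERIV_imp_deriv, rule DERIV_cong[OF DERIV_mult[OF DERIV_ident H_deriv[OF a]]]) simp
  finally show ?thesis .
qed

lemma dd1: assumes a: "a > 0" and b: "b > 0"
  shows "divdiff (hfun \<nu>) a b = - (\<integral>\<rho>. \<rho> / (2 * Lf \<rho> a * Lf \<rho> b) \<partial>\<nu>)"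
proof (cases "a = b")
  case True
  then show ?thesis using deriv_h[OF a] by (simp add: divdiff_def H1_def)
next
  case False
  have "H a - H b = (\<integral>\<rho>. 1 / (2 * Lf \<rho> a) - 1 / (2 * Lf \<rho> b) \<partial>\<nu>)"
    unfolding H_def by (rule lin2[symmetric]) (intro int1 a b)+
  also have "\<dots> = (\<integral>\<rho>. (a - b) * (- (\<rho> / (2 * Lf \<rho> a * Lf \<rho> b))) \<partial>\<nu>)"
  proof (rule int_cong01)
    fix \<rho> :: real assume "0 \<le> \<rho>" "\<rho> \<le> 1"
    then have "Lf \<rho> a > 0" "Lf \<rho> b > 0" using Lf_pos a b by auto
    then show "1 / (2 * Lf \<rho> a) - 1 / (2 * Lf \<rho> b) = (a - b) * (- (\<rho> / (2 * Lf \<rho> a * Lf \<rho> b)))"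
      by (intro alg2) (auto simp: Lf_def algebra_simps)
  qed (auto simp: Lf_def)
  also have "\<dots> = (a - b) * (- (\<integral>\<rho>. \<rho> / (2 * Lf \<rho> a * Lf \<rho> b) \<partial>\<nu>))"
    by (subst linc) (simp only: integral_minus)
  finally show ?thesis using False by (simp add: divdiff_def hfun_H a b)
qed

lemma dd2: assumes a: "a > 0" and b: "b > 0"
  shows "divdiff (\<lambda>l. l * hfun \<nu> l) a b = (\<integral>\<rho>. (1 - \<rho>) / (2 * Lf \<rho> a * Lf \<rho> b) \<partial>\<nu>)"
proof (cases "a = b")
  case True
  have "H a - a * H1 a = (\<integral>\<rho>. 1 / (2 * Lf \<rho> a) - a * (\<rho> / (2 * Lf \<rho> a * Lf \<rho> a)) \<partial>\<nu>)"
    unfolding H_def H1_def by (rule lin2c[symmetric]) (intro int1 intH1 a)+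
  also have "\<dots> = (\<integral>\<rho>. (1 - \<rho>) / (2 * Lf \<rho> a * Lf \<rho> a) \<partial>\<nu>)"
  proof (rule int_cong01)
    fix \<rho> :: real assume "0 \<le> \<rho>" "\<rho> \<le> 1"
    then have "Lf \<rho> a > 0" using Lf_pos a by auto
    then show "1 / (2 * Lf \<rho> a) - a * (\<rho> / (2 * Lf \<rho> a * Lf \<rho> a)) = (1 - \<rho>) / (2 * Lf \<rho> a * Lf \<rho> a)"
      by (intro alg4) (auto simp: Lf_def algebra_simps)
  qed (auto simp: Lf_def)
  finally show ?thesis using True deriv_lh[OF a] by (simp add: divdiff_def)
next
  case False
  have "a * H a - b * H b = (\<integral>\<rho>. a * (1 / (2 * Lf \<rho> a)) - b * (1 / (2 * Lf \<rho> b)) \<partial>\<nu>)"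
    unfolding H_def by (rule lin2d[symmetric]) (intro int1 a b)+
  also have "\<dots> = (\<integral>\<rho>. (a - b) * ((1 - \<rho>) / (2 * Lf \<rho> a * Lf \<rho> b)) \<partial>\<nu>)"
  proof (rule int_cong01)
    fix \<rho> :: real assume "0 \<le> \<rho>" "\<rho> \<le> 1"
    then have "Lf \<rho> a > 0" "Lf \<rho> b > 0" using Lf_pos a b by auto
    then show "a * (1 / (2 * Lf \<rho> a)) - b * (1 / (2 * Lf \<rho> b)) = (a - b) * ((1 - \<rho>) / (2 * Lf \<rho> a * Lf \<rho> b))"
      by (intro alg3) (auto simp: Lf_def algebra_simps)
  qed (auto simp: Lf_def)
  also have "\<dots> = (a - b) * (\<integral>\<rho>. (1 - \<rho>) / (2 * Lf \<rho> a * Lf \<rho> b) \<partial>\<nu>)"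
    by (rule linc)
  finally show ?thesis using False by (simp add: divdiff_def hfun_H a b)
qed

end


lemma outer_mv: "outer x y *v z = (y \<bullet> z) *\<^sub>R (x :: real^'m)"
  by (simp add: vec_eq_iff outer_def matrix_vector_mult_def inner_vec_def sum_distrib_left sum_distrib_right mult_ac)

lemma outer_scale: "outer (c *\<^sub>R x) y = c *\<^sub>R outer (x :: real^'m) y"
  by (simp add: vec_eq_iff outer_def)

lemma mv_sum: "(sum A I) *v (x :: real^'m) = (\<Sum>i\<in>I. A i *v x)"
  by (induction I rule: infinite_finite_induct) (simp_all add: matrix_vector_mult_add_rdistrib)

lemma mv_scale: "(c *\<^sub>R A) *v (x :: real^'m) = c *\<^sub>R (A *v x)"
  by (simp add: vec_eq_iff matrix_vector_mult_def sum_distrib_left mult.assoc)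

lemma mm_outer: "A ** outer x y = outer (A *v x) (y :: real^'m)"
  by (simp add: vec_eq_iff matrix_matrix_mult_def matrix_vector_mult_def outer_def sum_distrib_right mult.assoc)

lemma mm_sum: "(A :: real^'m^'m) ** sum B I = (\<Sum>i\<in>I. A ** B i)"
  by (induction I rule: infinite_finite_induct) (simp_all add: matrix_add_ldistrib)

lemma mm_scale: "(A :: real^'m^'m) ** (c *\<^sub>R B) = c *\<^sub>R (A ** B)"
  by (simp add: vec_eq_iff matrix_matrix_mult_def sum_distrib_left mult.left_commute)

lemma quad2:
  "(x :: real^'m) \<bullet> ((\<Sum>i\<in>I. \<Sum>j\<in>J. f i j *\<^sub>R outer (U i) (W j)) *v x)
     = (\<Sum>i\<in>I. \<Sum>j\<in>J. f i j * ((x \<bullet> U i) * (W j \<bullet> x)))"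
  by (simp add: mv_sum mv_scale outer_mv inner_sum_right mult.commute mult.left_commute)

lemma quad1:
  "(x :: real^'m) \<bullet> ((\<Sum>i\<in>I. f i *\<^sub>R outer (U i) (W i)) *v x)
     = (\<Sum>i\<in>I. f i * ((x \<bullet> U i) * (W i \<bullet> x)))"
  by (simp add: mv_sum mv_scale outer_mv inner_sum_right mult.commute mult.left_commute)

lemma biorth:
  fixes S :: "real^'m^'m" and V :: "'m \<Rightarrow> real^'m"
  assumes orth: "\<And>i j. V i \<bullet> (S *v V j) = (if i = j then 1 else 0)"
  shows "S ** (\<Sum>i\<in>UNIV. outer (V i) (V i)) = mat 1"
proof -
  define W :: "real^'m^'m" where "W = (\<chi> k j. V j $ k)"
  have P: "(\<Sum>i\<in>UNIV. outer (V i) (V i)) = W ** transpose W"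
    by (simp add: vec_eq_iff W_def outer_def matrix_matrix_mult_def transpose_def sum_component)
  have c1: "(A ** W) $ i $ j = (A *v V j) $ i" for A :: "real^'m^'m" and i j
    by (simp add: W_def matrix_matrix_mult_def matrix_vector_mult_def)
  have c2: "(transpose W *v z) $ i = V i \<bullet> z" for z i
    by (simp add: W_def transpose_def matrix_vector_mult_def inner_vec_def)
  have "(transpose W ** S) ** W = mat 1"
  proof -
    have "((transpose W ** S) ** W) $ i $ j = (if i = j then 1 else 0)" for i j
      using c1[of "transpose W ** S" i j] c2[of "S *v V j" i] orth[of i j]
      by (simp add: matrix_vector_mul_assoc[symmetric])
    then show ?thesis by (simp add: vec_eq_iff mat_def)
  qed
  then have "W ** (transpose W ** S) = mat 1" by (simp add: matrix_left_right_inverse)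
  then have "(W ** transpose W) ** S = mat 1" by (simp add: matrix_mul_assoc)
  then have "S ** (W ** transpose W) = mat 1" by (simp add: matrix_left_right_inverse)
  then show ?thesis using P by simp
qed

lemma matrix_inv_eq:
  fixes A B :: "real^'m^'m"
  assumes "A ** B = mat 1"
  shows "matrix_inv A = B"
proof -
  have BA: "B ** A = mat 1" using assms by (simp add: matrix_left_right_inverse)
  show ?thesis unfolding matrix_inv_def
  proof (rule some_equality)
    fix B' assume "A ** B' = mat 1 \<and> B' ** A = mat 1"
    then have "B' = B' ** (A ** B)" using assms by simp
    also have "\<dots> = (B' ** A) ** B" by (simp add: matrix_mul_assoc)
    also have "\<dots> = B" using \<open>A ** B' = mat 1 \<and> B' ** A = mat 1\<close> by simp
    finally show "B' = B" .
  qed (use assms BA in auto)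
qed

lemma inv_pencil:
  fixes Sp Sq :: "real^'m^'m" and V :: "'m \<Rightarrow> real^'m"
  assumes orth: "\<And>i j. V i \<bullet> (Sq *v V j) = (if i = j then 1 else 0)"
    and eig: "\<And>i. Sp *v V i = lam i *\<^sub>R (Sq *v V i)"
    and nz: "\<And>i. \<rho> * lam i + 1 - \<rho> \<noteq> 0"
  shows "matrix_inv (\<rho> *\<^sub>R Sp + (1 - \<rho>) *\<^sub>R Sq)
          = (\<Sum>i\<in>UNIV. (1 / (\<rho> * lam i + 1 - \<rho>)) *\<^sub>R outer (V i) (V i))"
proof (rule matrix_inv_eq)
  let ?A = "\<rho> *\<^sub>R Sp + (1 - \<rho>) *\<^sub>R Sq"
  have Av: "?A *v V i = (\<rho> * lam i + 1 - \<rho>) *\<^sub>R (Sq *v V i)" for i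
    by (simp add: matrix_vector_mult_add_rdistrib mv_scale eig algebra_simps)
  have nz': "\<rho> * lam i + 1 \<noteq> \<rho>" for i using nz[of i] by linarith
  have "?A ** (\<Sum>i\<in>UNIV. (1 / (\<rho> * lam i + 1 - \<rho>)) *\<^sub>R outer (V i) (V i))
        = (\<Sum>i\<in>UNIV. Sq ** outer (V i) (V i))"
    by (simp add: mm_sum mm_scale mm_outer Av outer_scale nz nz')
  also have "\<dots> = Sq ** (\<Sum>i\<in>UNIV. outer (V i) (V i))" by (simp add: mm_sum)
  also have "\<dots> = mat 1" by (rule biorth[OF orth])
  finally show "?A ** (\<Sum>i\<in>UNIV. (1 / (\<rho> * lam i + 1 - \<rho>)) *\<^sub>R outer (V i) (V i)) = mat 1" .
qed



lemma abs_le_sq: "\<bar>a::real\<bar> \<le> 1 + a * a"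
proof (cases "\<bar>a\<bar> \<le> 1")
  case True then show ?thesis using zero_le_square[of a] by linarith
next
  case False
  then have "\<bar>a\<bar> * 1 \<le> \<bar>a\<bar> * \<bar>a\<bar>" by (intro mult_left_mono) auto
  then show ?thesis using abs_mult_self_eq[of a] by linarith
qed

lemma abs_le_sq2: "\<bar>a::real\<bar> \<le> \<bar>1 + a * a\<bar>"
proof -
  have "1 + a * a \<ge> 0" using zero_le_square[of a] by linarith
  then have "\<bar>1 + a * a\<bar> = 1 + a * a" by (rule abs_of_nonneg)
  then show ?thesis using abs_le_sq[of a] by simp
qed

lemma bl_quad: "bounded_linear (\<lambda>A::real^'m^'m. a \<bullet> (A *v b))"
  unfolding linear_conv_bounded_linear[symmetric]
  by (rule linearI) (simp_all add: matrix_vector_mult_add_rdistrib mv_scale inner_add_right)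

lemma outer_expand:
  "outer (x::real^'m) x = (\<Sum>k\<in>UNIV. \<Sum>l\<in>UNIV. (x $ k * x $ l) *\<^sub>R outer (axis k 1) (axis l 1))"
proof -
  have inner: "(\<Sum>l\<in>UNIV. (x $ k * x $ l) * (axis k (1::real) $ i * axis l 1 $ j)) = (if k = i then x $ k * x $ j else 0)" for i j k
  proof -
    have "(\<Sum>l\<in>UNIV. (x $ k * x $ l) * (axis k (1::real) $ i * axis l 1 $ j))
        = (\<Sum>l\<in>UNIV. if l = j then (if k = i then x $ k * x $ l else 0) else 0)"
      by (intro sum.cong refl) (auto simp: axis_def)
    also have "\<dots> = (if k = i then x $ k * x $ j else 0)" by (simp only: sum.delta finite UNIV_I if_True)
    finally show ?thesis .
  qed
  have "(\<Sum>k\<in>UNIV. \<Sum>l\<in>UNIV. (x $ k * x $ l) * (axis k (1::real) $ i * axis l 1 $ j)) = x $ i * x $ j" for i j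
    by (simp only: inner sum.delta finite UNIV_I if_True)
  then show ?thesis by (simp add: vec_eq_iff outer_def)
qed

locale momctx = prob_space p for p :: "'a measure" +
  fixes \<phi> :: "'a \<Rightarrow> real^'m"
  assumes phi_meas: "\<phi> \<in> borel_measurable p"
    and mom: "\<And>i j. integrable p (\<lambda>x. \<phi> x $ i * \<phi> x $ j)"
begin

lemma comp_meas: "(\<lambda>x. \<phi> x $ k) \<in> borel_measurable p"
  by (rule measurable_compose[OF phi_meas borel_measurable_continuous_onI])
     (rule linear_continuous_on[OF bounded_linear_vec_nth])

lemma comp_int: "integrable p (\<lambda>x. \<phi> x $ k)"
proof -
  have i1: "integrable p (\<lambda>x. 1 + \<phi> x $ k * \<phi> x $ k)" using mom[of k k] by simp
  have ae: "AE x in p. norm (\<phi> x $ k) \<le> norm (1 + \<phi> x $ k * \<phi> x $ k)"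
    by (intro AE_I2) (simp only: real_norm_def abs_le_sq2)
  show ?thesis by (rule Bochner_Integration.integrable_bound[OF i1 comp_meas ae])
qed

lemma phi_int: "integrable p \<phi>"
proof -
  have "\<phi> x = (\<Sum>k\<in>UNIV. \<phi> x $ k *\<^sub>R axis k 1)" for x
    using basis_expansion[of "\<phi> x"] by (simp add: scalar_mult_eq_scaleR)
  then have "\<phi> = (\<lambda>x. \<Sum>k\<in>UNIV. \<phi> x $ k *\<^sub>R axis k 1)" by auto
  moreover have "integrable p (\<lambda>x. \<Sum>k\<in>UNIV. \<phi> x $ k *\<^sub>R axis k (1::real))"
    using comp_int by auto
  ultimately show ?thesis by simp
qed

lemma lin_int: "integrable p (\<lambda>x. c \<bullet> \<phi> x)"
  using phi_int by simp

lemma lin_integral: "(\<integral>x. c \<bullet> \<phi> x \<partial>p) = c \<bullet> mean_vec p \<phi>"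
  using phi_int by (simp add: mean_vec_def)

lemma outer_int: "integrable p (\<lambda>x. outer (\<phi> x) (\<phi> x))"
  unfolding outer_expand using mom by auto

lemma quad_eq: "(\<phi> x \<bullet> a) * (b \<bullet> \<phi> x) = a \<bullet> (outer (\<phi> x) (\<phi> x) *v b)"
  by (simp add: outer_mv inner_commute)

lemma quad_int: "integrable p (\<lambda>x. (\<phi> x \<bullet> a) * (b \<bullet> \<phi> x))"
  unfolding quad_eq by (rule integrable_bounded_linear[OF bl_quad outer_int])

lemma quad_integral: "(\<integral>x. (\<phi> x \<bullet> a) * (b \<bullet> \<phi> x) \<partial>p) = a \<bullet> (second_moment p \<phi> *v b)"
  unfolding quad_eq second_moment_def by (rule integral_bounded_linear[OF bl_quad outer_int])

end



lemma quad_ineq: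
  fixes L s t :: real
  assumes "L > 0"
  shows "- (L / 2) * s^2 + (t - 1) * s \<le> (1/2) * (t - 1)^2 / L"
proof -
  have e: "(1/2) * (t - 1)^2 / L - (- (L / 2) * s^2 + (t - 1) * s) = (L * s - (t - 1))^2 / (2 * L)"
    using assms by (simp add: field_simps power2_eq_square)
  have "(L * s - (t - 1))^2 / (2 * L) \<ge> 0" using assms by simp
  then show ?thesis using e by linarith
qed

lemma alg5:
  fixes X Y r t u v :: real
  assumes "X \<noteq> 0" "Y \<noteq> 0"
  shows "(- t * (r / (2 * X * Y)) - (1 - r) / (2 * X * Y)) * u * v = - ((r * t + 1 - r) / 2) * ((u / X) * (v / Y))"
  using assms by (simp add: field_simps)

lemma alg6: "(2 * t - 2) * y / (2 * L) = (t - 1) * y / (L::real)"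
  by (cases "L = 0") (simp_all add: field_simps)

context nuctx
begin

lemma feas_core:
  fixes a y :: "'i \<Rightarrow> real"
  assumes fin: "finite I" and apos: "\<And>i. i \<in> I \<Longrightarrow> a i > 0" and t: "t > 0"
  shows "(\<Sum>i\<in>I. \<Sum>j\<in>I. (t * divdiff (hfun \<nu>) (a i) (a j) - divdiff (\<lambda>l. l * hfun \<nu> l) (a i) (a j)) * y i * y j)
           + 2 * (t - 1) * (\<Sum>i\<in>I. hfun \<nu> (a i) * y i) \<le> fgen \<nu> t"
proof -
  define A where "A i j \<rho> = \<rho> / (2 * Lf \<rho> (a i) * Lf \<rho> (a j))" for i j \<rho>
  define B where "B i j \<rho> = (1 - \<rho>) / (2 * Lf \<rho> (a i) * Lf \<rho> (a j))" for i j \<rho>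
  define C where "C i \<rho> = 1 / (2 * Lf \<rho> (a i))" for i \<rho>
  have iA: "integrable \<nu> (A i j)" if "i \<in> I" "j \<in> I" for i j
    unfolding A_def using intAB apos that by blast
  have iB: "integrable \<nu> (B i j)" if "i \<in> I" "j \<in> I" for i j
    unfolding B_def using intAB' apos that by blast
  have iC: "integrable \<nu> (C i)" if "i \<in> I" for i
    unfolding C_def using int1 apos that by blast
  define G where "G \<rho> = (\<Sum>i\<in>I. \<Sum>j\<in>I. (- t * A i j \<rho> - B i j \<rho>) * y i * y j) + 2 * (t - 1) * (\<Sum>i\<in>I. C i \<rho> * y i)" for \<rho>
  have iG1: "integrable \<nu> (\<lambda>\<rho>. (- t * A i j \<rho> - B i j \<rho>) * y i * y j)" if "i \<in> I" "j \<in> I" for i j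
    using iA[OF that] iB[OF that] by simp
  have iG2: "integrable \<nu> (\<lambda>\<rho>. C i \<rho> * y i)" if "i \<in> I" for i
    using iC[OF that] by simp
  have intG: "integrable \<nu> G"
    unfolding G_def using iG1 iG2 by simp
  have "integral\<^sup>L \<nu> G = (\<Sum>i\<in>I. \<Sum>j\<in>I. (- t * integral\<^sup>L \<nu> (A i j) - integral\<^sup>L \<nu> (B i j)) * y i * y j)
        + 2 * (t - 1) * (\<Sum>i\<in>I. integral\<^sup>L \<nu> (C i) * y i)"
  proof -
    have s1: "(\<integral>\<rho>. (\<Sum>i\<in>I. \<Sum>j\<in>I. (- t * A i j \<rho> - B i j \<rho>) * y i * y j) \<partial>\<nu>)
        = (\<Sum>i\<in>I. \<Sum>j\<in>I. (- t * integral\<^sup>L \<nu> (A i j) - integral\<^sup>L \<nu> (B i j)) * y i * y j)"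
      using iA iB iG1 by (simp add: integral_sum)
    have s2: "(\<integral>\<rho>. 2 * (t - 1) * (\<Sum>i\<in>I. C i \<rho> * y i) \<partial>\<nu>) = 2 * (t - 1) * (\<Sum>i\<in>I. integral\<^sup>L \<nu> (C i) * y i)"
      using iC iG2 by (simp add: integral_sum)
    show ?thesis unfolding G_def
      using s1 s2 iG1 iG2 by (subst Bochner_Integration.integral_add) auto
  qed
  also have "\<dots> = (\<Sum>i\<in>I. \<Sum>j\<in>I. (t * divdiff (hfun \<nu>) (a i) (a j) - divdiff (\<lambda>l. l * hfun \<nu> l) (a i) (a j)) * y i * y j)
           + 2 * (t - 1) * (\<Sum>i\<in>I. hfun \<nu> (a i) * y i)"
    using apos by (simp add: dd1 dd2 hfun_H H_def A_def[abs_def] B_def[abs_def] C_def[abs_def])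
  finally have eqG: "integral\<^sup>L \<nu> G = (\<Sum>i\<in>I. \<Sum>j\<in>I. (t * divdiff (hfun \<nu>) (a i) (a j) - divdiff (\<lambda>l. l * hfun \<nu> l) (a i) (a j)) * y i * y j)
           + 2 * (t - 1) * (\<Sum>i\<in>I. hfun \<nu> (a i) * y i)" .
  have intF: "integrable \<nu> (\<lambda>\<rho>. (1/2) * (t - 1)^2 / (\<rho> * t + 1 - \<rho>))"
    by (rule intL) (use contL[OF t] in \<open>auto intro!: continuous_intros simp: Lf_def\<close>)
  have "integral\<^sup>L \<nu> G \<le> (\<integral>\<rho>. (1/2) * (t - 1)^2 / (\<rho> * t + 1 - \<rho>) \<partial>\<nu>)"
  proof (rule integral_mono_AE[OF intG intF])
    show "AE \<rho> in \<nu>. G \<rho> \<le> (1/2) * (t - 1)^2 / (\<rho> * t + 1 - \<rho>)"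
      using AE_L
    proof eventually_elim
      case (elim \<rho>)
      have Li: "Lf \<rho> (a i) > 0" if "i \<in> I" for i using elim apos[OF that] by auto
      have Lt: "Lf \<rho> t > 0" using elim t by auto
      define s where "s = (\<Sum>i\<in>I. y i / Lf \<rho> (a i))"
      have t1: "(- t * A i j \<rho> - B i j \<rho>) * y i * y j = - (Lf \<rho> t / 2) * ((y i / Lf \<rho> (a i)) * (y j / Lf \<rho> (a j)))"
        if "i \<in> I" "j \<in> I" for i j
        using Li[OF that(1)] Li[OF that(2)] unfolding A_def B_def Lf_def[of \<rho> t]
        by (intro alg5) auto
      have "(\<Sum>i\<in>I. \<Sum>j\<in>I. (- t * A i j \<rho> - B i j \<rho>) * y i * y j)
          = (\<Sum>i\<in>I. \<Sum>j\<in>I. - (Lf \<rho> t / 2) * ((y i / Lf \<rho> (a i)) * (y j / Lf \<rho> (a j))))"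
        using t1 by simp
      also have "\<dots> = - (Lf \<rho> t / 2) * s^2"
        unfolding s_def power2_eq_square sum_product by (simp add: sum_distrib_left)
      finally have p1: "(\<Sum>i\<in>I. \<Sum>j\<in>I. (- t * A i j \<rho> - B i j \<rho>) * y i * y j) = - (Lf \<rho> t / 2) * s^2" .
      have "2 * (t - 1) * (\<Sum>i\<in>I. C i \<rho> * y i) = (t - 1) * s"
        unfolding s_def C_def by (simp add: sum_distrib_left) (rule sum.cong[OF refl], rule alg6)
      then have "G \<rho> = - (Lf \<rho> t / 2) * s^2 + (t - 1) * s" unfolding G_def using p1 by simp
      also have "\<dots> \<le> (1/2) * (t - 1)^2 / Lf \<rho> t" by (rule quad_ineq[OF Lt])
      finally show ?case by (simp add: Lf_def)
    qed
  qed
  then show ?thesis using eqG by (simp add: fgen_def)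
qed

end

lemma mv_neg: "(- A) *v x = - (A *v (x::real^'m))"
  by (simp add: vec_eq_iff matrix_vector_mult_def sum_negf)

lemma sumsum_delta:
  fixes f :: "'m::finite \<Rightarrow> 'm \<Rightarrow> real"
  shows "(\<Sum>i\<in>UNIV. \<Sum>j\<in>UNIV. f i j * (if i = j then g i else 0)) = (\<Sum>i\<in>UNIV. f i i * g i)"
proof -
  have "(\<Sum>j\<in>UNIV. f i j * (if i = j then g i else 0)) = f i i * g i" for i
  proof -
    have "(\<Sum>j\<in>UNIV. f i j * (if i = j then g i else 0)) = (\<Sum>j\<in>UNIV. if j = i then f i j * g i else 0)"
      by (intro sum.cong) auto
    also have "\<dots> = f i i * g i" by (simp only: sum.delta finite UNIV_I if_True)
    finally show ?thesis .
  qed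
  then show ?thesis by simp
qed

lemma finite_roots: "finite {\<rho>::real. \<rho> * a + 1 - \<rho> = 0}"
proof (rule finite_subset[of _ "{1 / (1 - a)}"])
  show "{\<rho>::real. \<rho> * a + 1 - \<rho> = 0} \<subseteq> {1 / (1 - a)}"
  proof
    fix \<rho> assume "\<rho> \<in> {\<rho>::real. \<rho> * a + 1 - \<rho> = 0}"
    then have e: "\<rho> * (1 - a) = 1" by (simp add: algebra_simps)
    then have "1 - a \<noteq> 0" by auto
    then show "\<rho> \<in> {1 / (1 - a)}" using e by (simp add: field_simps)
  qed
qed auto

theorem proposition2:
  fixes \<nu> :: "real measure" and p q :: "'a measure" and \<phi> :: "'a \<Rightarrow> real^'m"
    and V :: "'m \<Rightarrow> real^'m" and lam :: "'m \<Rightarrow> real"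
  assumes nu_prob: "prob_space \<nu>" and nu_borel: "sets \<nu> = sets borel"
    and nu_supp: "AE \<rho> in \<nu>. 0 \<le> \<rho> \<and> \<rho> \<le> 1"
    and p_prob: "prob_space p" and q_prob: "prob_space q"
    and sets_pq: "sets q = sets p"
    and phi_meas: "\<phi> \<in> borel_measurable p"
    and p_mom: "\<And>i j. integrable p (\<lambda>x. \<phi> x $ i * \<phi> x $ j)"
    and q_mom: "\<And>i j. integrable q (\<lambda>x. \<phi> x $ i * \<phi> x $ j)"
    and Sq_inv: "invertible (second_moment q \<phi>)"
    and V_orth: "\<And>i j. V i \<bullet> (second_moment q \<phi> *v V j) = (if i = j then 1 else 0)"
    and V_eig: "\<And>i. second_moment p \<phi> *v V i = lam i *\<^sub>R (second_moment q \<phi> *v V i)"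
    and lam_pos: "\<And>i. lam i > 0"
  defines "d \<equiv> mean_vec p \<phi> - mean_vec q \<phi>"
  shows "(\<forall>x\<in>space p.
            ereal (\<phi> x \<bullet> (Nmat \<nu> d V lam *v \<phi> x) - 2 * (cvec \<nu> d V lam \<bullet> \<phi> x))
              \<le> - fconj \<nu> (\<phi> x \<bullet> (Mmat \<nu> d V lam *v \<phi> x) + 2 * (cvec \<nu> d V lam \<bullet> \<phi> x)))
       \<and> Fdiv \<nu> p q \<phi>
           = (\<integral>x. \<phi> x \<bullet> (Mmat \<nu> d V lam *v \<phi> x) + 2 * (cvec \<nu> d V lam \<bullet> \<phi> x) \<partial>p)
           + (\<integral>x. \<phi> x \<bullet> (Nmat \<nu> d V lam *v \<phi> x) - 2 * (cvec \<nu> d V lam \<bullet> \<phi> x) \<partial>q)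
       \<and> Fdiv \<nu> p q \<phi> = (\<Sum>i\<in>UNIV. hfun \<nu> (lam i) * (d \<bullet> V i)^2)"
proof -
  interpret N: nuctx \<nu> using nu_prob nu_borel nu_supp by (simp add: nuctx_def nuctx_axioms_def)
  have phi_q: "\<phi> \<in> borel_measurable q" using phi_meas measurable_cong_sets[OF sets_pq refl, of "borel :: (real^'m) measure"] by simp
  interpret P: momctx p \<phi> using p_prob phi_meas p_mom by (simp add: momctx_def momctx_axioms_def)
  interpret Q: momctx q \<phi> using q_prob phi_q q_mom by (simp add: momctx_def momctx_axioms_def)
  define Sp where "Sp = second_moment p \<phi>"
  define Sq where "Sq = second_moment q \<phi>"
  define h where "h i = hfun \<nu> (lam i)" for i
  define D1 where "D1 i j = divdiff (hfun \<nu>) (lam i) (lam j)" for i j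
  define D2 where "D2 i j = divdiff (\<lambda>l. l * hfun \<nu> l) (lam i) (lam j)" for i j
  define c where "c = cvec \<nu> d V lam"
  define T where "T = (\<Sum>i\<in>UNIV. hfun \<nu> (lam i) * (d \<bullet> V i)^2)"
  have c_inner: "c \<bullet> z = (\<Sum>i\<in>UNIV. h i * (V i \<bullet> d) * (V i \<bullet> z))" for z
    unfolding c_def cvec_def h_def by (simp add: inner_sum_left)
  have M_quad: "z \<bullet> (Mmat \<nu> d V lam *v z) = (\<Sum>i\<in>UNIV. \<Sum>j\<in>UNIV. ((d \<bullet> V i) * (V j \<bullet> d) * D1 i j) * ((z \<bullet> V i) * (V j \<bullet> z)))" for z
    unfolding Mmat_def D1_def by (rule quad2)
  have N_quad: "z \<bullet> (Nmat \<nu> d V lam *v z) = - (\<Sum>i\<in>UNIV. \<Sum>j\<in>UNIV. ((d \<bullet> V i) * (V j \<bullet> d) * D2 i j) * ((z \<bullet> V i) * (V j \<bullet> z)))" for z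
    unfolding Nmat_def D2_def mv_neg inner_minus_right quad2 ..
  have D1d: "D1 i i = - N.H1 (lam i)" for i using N.deriv_h lam_pos by (simp add: D1_def divdiff_def)
  have D2d: "D2 i i = N.H (lam i) - lam i * N.H1 (lam i)" for i using N.deriv_lh lam_pos by (simp add: D2_def divdiff_def)
  have hH: "h i = N.H (lam i)" for i using N.hfun_H lam_pos by (simp add: h_def)
  have Sp_VV: "V i \<bullet> (Sp *v V j) = (if i = j then lam i else 0)" for i j
    using V_orth[of i j] by (auto simp: Sp_def V_eig)
  have Sq_VV: "V i \<bullet> (Sq *v V j) = (if i = j then 1 else 0)" for i j
    using V_orth[of i j] by (simp add: Sq_def)

  have intv: "(\<integral>x. \<phi> x \<bullet> (Mmat \<nu> d V lam *v \<phi> x) + 2 * (c \<bullet> \<phi> x) \<partial>p)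
      = (\<Sum>i\<in>UNIV. ((d \<bullet> V i) * (V i \<bullet> d) * D1 i i) * lam i) + 2 * (c \<bullet> mean_vec p \<phi>)"
  proof -
    have "(\<integral>x. \<phi> x \<bullet> (Mmat \<nu> d V lam *v \<phi> x) + 2 * (c \<bullet> \<phi> x) \<partial>p)
       = (\<integral>x. (\<Sum>i\<in>UNIV. \<Sum>j\<in>UNIV. ((d \<bullet> V i) * (V j \<bullet> d) * D1 i j) * ((\<phi> x \<bullet> V i) * (V j \<bullet> \<phi> x))) + 2 * (c \<bullet> \<phi> x) \<partial>p)"
      by (simp only: M_quad)
    also have "\<dots> = (\<Sum>i\<in>UNIV. \<Sum>j\<in>UNIV. ((d \<bullet> V i) * (V j \<bullet> d) * D1 i j) * (V i \<bullet> (Sp *v V j))) + 2 * (c \<bullet> mean_vec p \<phi>)"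
      by (simp add: P.quad_int P.quad_integral P.lin_int P.lin_integral Sp_def)
    also have "\<dots> = (\<Sum>i\<in>UNIV. ((d \<bullet> V i) * (V i \<bullet> d) * D1 i i) * lam i) + 2 * (c \<bullet> mean_vec p \<phi>)"
      unfolding Sp_VV by (subst sumsum_delta) simp
    finally show ?thesis .
  qed
  have intw: "(\<integral>x. \<phi> x \<bullet> (Nmat \<nu> d V lam *v \<phi> x) - 2 * (c \<bullet> \<phi> x) \<partial>q)
      = - (\<Sum>i\<in>UNIV. ((d \<bullet> V i) * (V i \<bullet> d) * D2 i i) * 1) - 2 * (c \<bullet> mean_vec q \<phi>)"
  proof -
    have "(\<integral>x. \<phi> x \<bullet> (Nmat \<nu> d V lam *v \<phi> x) - 2 * (c \<bullet> \<phi> x) \<partial>q)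
       = (\<integral>x. - (\<Sum>i\<in>UNIV. \<Sum>j\<in>UNIV. ((d \<bullet> V i) * (V j \<bullet> d) * D2 i j) * ((\<phi> x \<bullet> V i) * (V j \<bullet> \<phi> x))) - 2 * (c \<bullet> \<phi> x) \<partial>q)"
      by (simp only: N_quad)
    also have "\<dots> = - (\<Sum>i\<in>UNIV. \<Sum>j\<in>UNIV. ((d \<bullet> V i) * (V j \<bullet> d) * D2 i j) * (V i \<bullet> (Sq *v V j))) - 2 * (c \<bullet> mean_vec q \<phi>)"
      by (simp add: Q.quad_int Q.quad_integral Q.lin_int Q.lin_integral Sq_def)
    also have "\<dots> = - (\<Sum>i\<in>UNIV. ((d \<bullet> V i) * (V i \<bullet> d) * D2 i i) * 1) - 2 * (c \<bullet> mean_vec q \<phi>)"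
      unfolding Sq_VV by (subst sumsum_delta) simp
    finally show ?thesis .
  qed
  have cd: "c \<bullet> d = (\<Sum>i\<in>UNIV. N.H (lam i) * (d \<bullet> V i)^2)"
    unfolding c_inner hH by (simp add: inner_commute power2_eq_square mult_ac)
  have vw: "(\<integral>x. \<phi> x \<bullet> (Mmat \<nu> d V lam *v \<phi> x) + 2 * (c \<bullet> \<phi> x) \<partial>p)
      + (\<integral>x. \<phi> x \<bullet> (Nmat \<nu> d V lam *v \<phi> x) - 2 * (c \<bullet> \<phi> x) \<partial>q) = T"
  proof -
    have "(\<integral>x. \<phi> x \<bullet> (Mmat \<nu> d V lam *v \<phi> x) + 2 * (c \<bullet> \<phi> x) \<partial>p)
      + (\<integral>x. \<phi> x \<bullet> (Nmat \<nu> d V lam *v \<phi> x) - 2 * (c \<bullet> \<phi> x) \<partial>q)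
      = (\<Sum>i\<in>UNIV. ((d \<bullet> V i) * (V i \<bullet> d) * D1 i i) * lam i) - (\<Sum>i\<in>UNIV. ((d \<bullet> V i) * (V i \<bullet> d) * D2 i i) * 1)
        + 2 * (c \<bullet> mean_vec p \<phi> - c \<bullet> mean_vec q \<phi>)"
      unfolding intv intw by (simp add: algebra_simps)
    also have "c \<bullet> mean_vec p \<phi> - c \<bullet> mean_vec q \<phi> = c \<bullet> d"
      unfolding d_def by (simp add: inner_diff_right)
    also have "(\<Sum>i\<in>UNIV. ((d \<bullet> V i) * (V i \<bullet> d) * D1 i i) * lam i) - (\<Sum>i\<in>UNIV. ((d \<bullet> V i) * (V i \<bullet> d) * D2 i i) * 1)
        = (\<Sum>i\<in>UNIV. (d \<bullet> V i)^2 * (D1 i i * lam i - D2 i i))"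
      unfolding sum_subtractf[symmetric]
      by (intro sum.cong refl) (simp add: algebra_simps inner_commute power2_eq_square)
    also have "(\<Sum>i\<in>UNIV. (d \<bullet> V i)^2 * (D1 i i * lam i - D2 i i)) = - (\<Sum>i\<in>UNIV. N.H (lam i) * (d \<bullet> V i)^2)"
      unfolding sum_negf[symmetric] D1d D2d by (intro sum.cong refl) (simp add: algebra_simps)
    also have "- (\<Sum>i\<in>UNIV. N.H (lam i) * (d \<bullet> V i)^2) + 2 * (c \<bullet> d) = T"
      unfolding cd T_def using hH by (simp add: h_def)
    finally show ?thesis .
  qed

  have Fval: "Fdiv \<nu> p q \<phi> = T"
  proof -
    define fF where "fF \<rho> = d \<bullet> (matrix_inv (\<rho> *\<^sub>R Sp + (1 - \<rho>) *\<^sub>R Sq) *v d)" for \<rho>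
    define gF where "gF \<rho> = (\<Sum>i\<in>UNIV. (1 / (\<rho> * lam i + 1 - \<rho>)) * ((d \<bullet> V i) * (V i \<bullet> d)))" for \<rho>
    have Fd: "Fdiv \<nu> p q \<phi> = 1/2 * integral\<^sup>L \<nu> fF"
      unfolding Fdiv_def fF_def Let_def d_def Sp_def Sq_def by simp
    have orth': "\<And>i j. V i \<bullet> (Sq *v V j) = (if i = j then 1 else 0)" using V_orth by (simp add: Sq_def)
    have eig': "\<And>i. Sp *v V i = lam i *\<^sub>R (Sq *v V i)" using V_eig by (simp add: Sp_def Sq_def)
    have fg: "fF \<rho> = gF \<rho>" if nz: "\<And>i. \<rho> * lam i + 1 - \<rho> \<noteq> 0" for \<rho>
      unfolding fF_def gF_def inv_pencil[OF orth' eig' nz] quad1 ..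
    define Z where "Z = (\<Union>i\<in>UNIV. {\<rho>::real. \<rho> * lam i + 1 - \<rho> = 0})"
    have finZ: "finite Z" unfolding Z_def using finite_roots by auto
    have fF_eq: "fF = (\<lambda>\<rho>. gF \<rho> + (\<Sum>z\<in>Z. (fF z - gF z) * indicator {z} \<rho>))"
    proof
      fix \<rho>
      have "(\<Sum>z\<in>Z. (fF z - gF z) * indicator {z} \<rho>) = (\<Sum>z\<in>Z. if z = \<rho> then fF z - gF z else 0)"
        by (intro sum.cong refl) (auto simp: indicator_def)
      also have "\<dots> = (if \<rho> \<in> Z then fF \<rho> - gF \<rho> else 0)" using finZ by (simp add: sum.delta)
      finally have e: "(\<Sum>z\<in>Z. (fF z - gF z) * indicator {z} \<rho>) = (if \<rho> \<in> Z then fF \<rho> - gF \<rho> else 0)" .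
      show "fF \<rho> = gF \<rho> + (\<Sum>z\<in>Z. (fF z - gF z) * indicator {z} \<rho>)"
      proof (cases "\<rho> \<in> Z")
        case True then show ?thesis using e by simp
      next
        case False
        then have "\<And>i. \<rho> * lam i + 1 - \<rho> \<noteq> 0" unfolding Z_def by auto
        then show ?thesis using e False fg by simp
      qed
    qed
    have meas_g: "gF \<in> borel_measurable borel" unfolding gF_def by measurable
    have meas_f: "fF \<in> borel_measurable borel"
      by (subst fF_eq) (intro borel_measurable_add meas_g borel_measurable_sum borel_measurable_times
          borel_measurable_const borel_measurable_indicator, simp)
    have AE: "AE \<rho> in \<nu>. fF \<rho> = gF \<rho>"
      using nu_supp
    proof eventually_elim
      case (elim \<rho>)
      have "\<And>i. \<rho> * lam i + 1 - \<rho> \<noteq> 0"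
        using Lf_pos(2)[of \<rho> "lam _"] elim lam_pos unfolding Lf_def by (metis less_irrefl)
      then show ?case by (rule fg)
    qed
    have "integral\<^sup>L \<nu> fF = integral\<^sup>L \<nu> gF"
      by (rule integral_cong_AE[OF N.meas_nu[OF meas_f] N.meas_nu[OF meas_g] AE])
    moreover have "1/2 * integral\<^sup>L \<nu> gF = (\<Sum>i\<in>UNIV. ((d \<bullet> V i) * (V i \<bullet> d)) * N.H (lam i))"
    proof -
      have "1/2 * integral\<^sup>L \<nu> gF = (\<integral>\<rho>. (\<Sum>i\<in>UNIV. ((d \<bullet> V i) * (V i \<bullet> d)) * (1 / (2 * Lf \<rho> (lam i)))) \<partial>\<nu>)"
      proof -
        have "(\<lambda>\<rho>. 1/2 * gF \<rho>) = (\<lambda>\<rho>. (\<Sum>i\<in>UNIV. ((d \<bullet> V i) * (V i \<bullet> d)) * (1 / (2 * Lf \<rho> (lam i)))))"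
          unfolding gF_def Lf_def by (simp add: sum_distrib_left)
        then show ?thesis by (metis N.linc)
      qed
      also have "\<dots> = (\<Sum>i\<in>UNIV. (\<integral>\<rho>. ((d \<bullet> V i) * (V i \<bullet> d)) * (1 / (2 * Lf \<rho> (lam i))) \<partial>\<nu>))"
        by (rule Bochner_Integration.integral_sum) (intro integrable_mult_right N.int1 lam_pos)
      also have "\<dots> = (\<Sum>i\<in>UNIV. ((d \<bullet> V i) * (V i \<bullet> d)) * N.H (lam i))"
        by (simp only: N.linc N.H_def)
      finally show ?thesis .
    qed
    ultimately show ?thesis unfolding Fd T_def
      using N.hfun_H lam_pos by (simp add: inner_commute power2_eq_square mult_ac)
  qed

  have feas: "\<forall>x\<in>space p.
            ereal (\<phi> x \<bullet> (Nmat \<nu> d V lam *v \<phi> x) - 2 * (cvec \<nu> d V lam \<bullet> \<phi> x))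
              \<le> - fconj \<nu> (\<phi> x \<bullet> (Mmat \<nu> d V lam *v \<phi> x) + 2 * (cvec \<nu> d V lam \<bullet> \<phi> x))"
  proof
    fix x assume "x \<in> space p"
    define y where "y i = (d \<bullet> V i) * (\<phi> x \<bullet> V i)" for i
    define u where "u = \<phi> x \<bullet> (Mmat \<nu> d V lam *v \<phi> x) + 2 * (c \<bullet> \<phi> x)"
    define w where "w = \<phi> x \<bullet> (Nmat \<nu> d V lam *v \<phi> x) - 2 * (c \<bullet> \<phi> x)"
    have u_eq: "u = (\<Sum>i\<in>UNIV. \<Sum>j\<in>UNIV. D1 i j * y i * y j) + 2 * (\<Sum>i\<in>UNIV. h i * y i)"
      unfolding u_def M_quad c_inner y_def by (simp add: inner_commute mult_ac)
    have w_eq: "w = - (\<Sum>i\<in>UNIV. \<Sum>j\<in>UNIV. D2 i j * y i * y j) - 2 * (\<Sum>i\<in>UNIV. h i * y i)"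
      unfolding w_def N_quad c_inner y_def by (simp add: inner_commute mult_ac)
    have key: "u * t + w \<le> fgen \<nu> t" if t: "t > 0" for t
    proof -
      have "u * t + w = (\<Sum>i\<in>UNIV. \<Sum>j\<in>UNIV. (t * D1 i j - D2 i j) * y i * y j) + 2 * (t - 1) * (\<Sum>i\<in>UNIV. h i * y i)"
        unfolding u_eq w_eq by (simp add: sum_distrib_left sum_distrib_right sum_subtractf algebra_simps)
      also have "\<dots> \<le> fgen \<nu> t"
        using N.feas_core[of UNIV lam t y] lam_pos t unfolding D1_def D2_def h_def by simp
      finally show ?thesis .
    qed
    have "fconj \<nu> u \<le> ereal (- w)"
      unfolding fconj_def
    proof (rule SUP_least)
      fix t :: real assume "t \<in> {0<..}"
      then show "ereal (u * t - fgen \<nu> t) \<le> ereal (- w)" using key[of t] by simp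
    qed
    then have "ereal w \<le> - fconj \<nu> u"
      by (metis ereal_minus_le_minus ereal_uminus_uminus uminus_ereal.simps(1))
    then show "ereal (\<phi> x \<bullet> (Nmat \<nu> d V lam *v \<phi> x) - 2 * (cvec \<nu> d V lam \<bullet> \<phi> x))
              \<le> - fconj \<nu> (\<phi> x \<bullet> (Mmat \<nu> d V lam *v \<phi> x) + 2 * (cvec \<nu> d V lam \<bullet> \<phi> x))"
      unfolding u_def w_def c_def .
  qed
  show ?thesis using feas Fval vw unfolding c_def T_def by simp
qed


end
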